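(* There is an absolute constant $K$ such that, for every $0<\epsilon<1$, over any sequence of soft sequence heap operations containing $N$ insertions, the sum over all sequences ever created (by insertion or by merging, after the possible application of $\mathrm{reduce}$) of their lengths at creation is at most $K\cdot N\lg\frac1\epsilon$ (for $\epsilon\le 1/2$; in general $O(N(1+\lg\frac1\epsilon))$).
   Context: Soft sequence heap with error parameter $0<\epsilon<1$ and $r_0=\lceil \lg(1/\epsilon)\rceil$ ($\lg$ = binary logarithm). The heap stores a list of nonempty sequences of items, each sorted increasingly by key and having a nonnegative integer rank. The operation $\mathrm{reduce}(L)$ on a sorted sequence $L=e_1,\dots,e_m$ removes $e_{2i}$ from $L$ for every $1\le i<m/2$, so the result has $\lceil (m+1)/2\rceil$ items. Each insertion creates one new sequence of rank $0$ containing the inserted item. A sequence of rank $r+1$ is created only by merging (sorted union) two existing sequences of rank $r$, which are thereby destroyed; if $r+1>r_0$ and $r+1-r_0$ is even, $\mathrm{reduce}$ is then applied to the result. Insertions and melds (which combine the sequence lists of two heaps) perform such merges while two sequences have equal rank; extract-min operations only remove items from sequences. *)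

theory Defs
  imports Complex_Main "HOL-Library.Multiset"
begin

text \<open>Abstract model of the soft sequence heap, tracking for every stored sequence
  only the heap it belongs to, its rank and its current length (number of items).
  A stored sequence is a triple (heap identifier, rank, length), length >= 1.
  A global state is (stored sequences, number of insertions so far,
  sum of the lengths at creation of all sequences created so far).\<close>

type_synonym ssh_state = "(nat \<times> nat \<times> nat) multiset \<times> nat \<times> nat"

definition ssh_r0 :: "real \<Rightarrow> nat" where
  "ssh_r0 eps = nat \<lceil>log 2 (1 / eps)\<rceil>"

text \<open>reduce applied to a sorted list: removes e_(2i) (1-based) for 1 <= i < m/2.\<close>
definition reduce :: "'a list \<Rightarrow> 'a list" where
  "reduce L = map (nth L) (filter (\<lambda>j. \<not> (odd j \<and> j + 1 < length L)) [0..<length L])"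

definition reduce_applies :: "nat \<Rightarrow> nat \<Rightarrow> bool" where
  "reduce_applies r0 k \<longleftrightarrow> k > r0 \<and> even (k - r0)"

text \<open>Length at creation of a rank-k sequence obtained by merging two sequences of
  total length m: m, or the length of reduce applied to a list of length m.\<close>
definition created_len :: "nat \<Rightarrow> nat \<Rightarrow> nat \<Rightarrow> nat" where
  "created_len r0 k m = (if reduce_applies r0 k then length (reduce [0..<m]) else m)"

inductive ssh_step :: "nat \<Rightarrow> ssh_state \<Rightarrow> ssh_state \<Rightarrow> bool" for r0 :: nat where
  insert: "ssh_step r0 (S, n, c) (S + {#(h, 0, 1)#}, Suc n, c + 1)"
|
  merge: "ssh_step r0 (S + {#(h, r, a), (h, r, b)#}, n, c)
            (S + {#(h, Suc r, created_len r0 (Suc r) (a + b))#}, n,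
             c + created_len r0 (Suc r) (a + b))"
|
  meld: "ssh_step r0 (S, n, c)
           (image_mset (\<lambda>(h, r, a). if h = j then (i, r, a) else (h, r, a)) S, n, c)"
| \<comment> \<open>extract-min: remove an item from a sequence; empty sequences are discarded\<close>
  remove: "ssh_step r0 (S + {#(h, r, Suc a)#}, n, c)
             (if a = 0 then S else S + {#(h, r, a)#}, n, c)"

definition ssh_reachable :: "nat \<Rightarrow> ssh_state \<Rightarrow> bool" where
  "ssh_reachable r0 st \<longleftrightarrow> (ssh_step r0)\<^sup>*\<^sup>* ({#}, 0, 0) st"

end

theory Submission
  imports Defs
begin

fun Bd :: "nat \<Rightarrow> nat \<Rightarrow> nat" where
  "Bd r0 0 = 1"
| "Bd r0 (Suc k) = (if reduce_applies r0 (Suc k) then Bd r0 k + 1 else 2 * Bd r0 k)"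

fun Qd :: "nat \<Rightarrow> nat \<Rightarrow> nat" where
  "Qd r0 0 = 1"
| "Qd r0 (Suc k) = 2 * Qd r0 k + Bd r0 (Suc k)"

lemma len_even: "length (filter even [0..<m]) = (m+1) div 2"
  by (induction m) auto

lemma reduce_len: "length (reduce [0..<m]) \<le> (m+1) div 2 + 1"
proof (cases m)
  case 0 then show ?thesis by (simp add: reduce_def)
next
  case (Suc m')
  have "filter (\<lambda>j. \<not> (odd j \<and> j + 1 < m)) [0..<m']
        = filter even [0..<m']"
    by (rule filter_cong) (auto simp: Suc)
  then have "length (reduce [0..<m]) = (m'+1) div 2 + 1"
    by (simp add: reduce_def Suc len_even)
  then show ?thesis using Suc by simp
qed

lemma low: "k \<le> r0 \<Longrightarrow> Bd r0 k = 2^k \<and> Qd r0 k = (k+1)*2^k"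
  by (induction k) (auto simp: reduce_applies_def)

lemma high: "Bd r0 (r0+2*j) + 1 = 2^j*(2^r0+1) \<and> Bd r0 (r0+2*j+1) + 2 = 2^(j+1)*(2^r0+1)"
proof (induction j)
  case 0
  have "Bd r0 r0 = 2^r0" using low by auto
  then show ?case by (simp add: reduce_applies_def)
next
  case (Suc j)
  have e1: "r0 + 2 * Suc j = Suc (r0+2*j+1)" by simp
  have e2: "r0 + 2 * Suc j + 1 = Suc (r0 + 2 * Suc j)" by simp
  have a1: "Bd r0 (r0 + 2 * Suc j) = Bd r0 (r0+2*j+1) + 1"
    unfolding e1 by (simp add: reduce_applies_def)
  have a2: "Bd r0 (r0 + 2 * Suc j + 1) = 2 * Bd r0 (r0 + 2 * Suc j)"
    unfolding e2 by (simp add: reduce_applies_def)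
  show ?case using Suc a1 a2 by (auto simp: algebra_simps)
qed

lemma Qhigh: "Qd r0 (r0+2*j) + 6*2^(r0+j) \<le> (r0+7)*2^(r0+2*j)
   \<and> Qd r0 (r0+2*j+1) + 4*2^(r0+j+1) \<le> (r0+7)*2^(r0+2*j+1)"
proof (induction j)
  case 0
  have q: "Qd r0 r0 = (r0+1)*2^r0" using low by auto
  have b: "Bd r0 (r0+1) + 2 = 2*(2^r0+1)" using high[of r0 0] by simp
  have "Qd r0 (r0+1) = 2*Qd r0 r0 + Bd r0 (r0+1)" by simp
  then show ?case using q b by (simp add: algebra_simps)
next
  case (Suc j)
  have t: "(2::nat)^r0 + 1 \<le> 2*2^r0" by simp
  have e1: "r0 + 2 * Suc j = Suc (r0+2*j+1)" by simp
  have e2: "r0 + 2 * Suc j + 1 = Suc (r0 + 2 * Suc j)" by simp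
  have q1: "Qd r0 (r0 + 2 * Suc j) = 2*Qd r0 (r0+2*j+1) + Bd r0 (r0 + 2 * Suc j)"
    unfolding e1 by simp
  have q2: "Qd r0 (r0 + 2 * Suc j + 1) = 2*Qd r0 (r0 + 2 * Suc j) + Bd r0 (r0 + 2 * Suc j+1)"
    unfolding e2 by simp
  have b1: "Bd r0 (r0 + 2 * Suc j) + 1 = 2^(Suc j)*(2^r0+1)" using high[of r0 "Suc j"] by simp
  have b2: "Bd r0 (r0 + 2 * Suc j + 1) + 2 = 2^(Suc j+1)*(2^r0+1)" using high[of r0 "Suc j"] by simp
  have m1: "2^(Suc j)*((2::nat)^r0+1) \<le> 2^(Suc j)*(2*2^r0)" using t by (rule mult_left_mono) simp
  have m2: "2^(Suc j+1)*((2::nat)^r0+1) \<le> 2^(Suc j+1)*(2*2^r0)" using t by (rule mult_left_mono) simp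
  have p1: "(2::nat)^(r0 + 2 * Suc j) = 2 * 2^(r0+2*j+1)" by (simp add: power_add)
  have p2: "(2::nat)^(r0 + 2 * Suc j + 1) = 2 * 2^(r0+2*Suc j)" by (simp add: power_add)
  have p3: "(2::nat)^(r0+Suc j) = 2^(Suc j) * 2^r0" "(2::nat)^(r0+j+1) = 2^(Suc j) * 2^r0"
     "(2::nat)^(r0+Suc j+1) = 2 * 2^(Suc j) * 2^r0"
    by (simp_all add: power_add)
  define X where "X = (2::nat)^(Suc j) * 2^r0"
  define P where "P = (2::nat)^(r0+2*j+1)"
  have f1: "Bd r0 (r0 + 2 * Suc j) + 1 \<le> 2 * X"
    using b1 m1 unfolding X_def by (simp only: mult.left_commute)
  have f2: "Bd r0 (r0 + 2 * Suc j + 1) + 2 \<le> 4 * X"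
  proof -
    have "2^(Suc j+1)*(2*(2::nat)^r0) = 4 * X" unfolding X_def by (simp add: algebra_simps)
    then show ?thesis using b2 m2 by linarith
  qed
  have IH: "Qd r0 (r0+2*j+1) + 4*X \<le> (r0+7)*P"
    using Suc.IH unfolding X_def P_def p3 by linarith
  have A': "Qd r0 (r0 + 2 * Suc j) + 6 * X \<le> 2*((r0+7)*P)"
    using IH q1 f1 by linarith
  have B': "Qd r0 (r0 + 2 * Suc j + 1) + 8 * X \<le> 4*((r0+7)*P)"
    using A' q2 f2 by linarith
  have e3: "(2::nat) ^ (r0 + 2 * Suc j) = 2*P" unfolding P_def using p1 .
  have e4: "(2::nat) ^ (r0 + 2 * Suc j + 1) = 4*P" unfolding P_def using p1 p2 by linarith
  have A: "Qd r0 (r0 + 2 * Suc j) + 6 * 2 ^ (r0 + Suc j) \<le> (r0 + 7) * 2 ^ (r0 + 2 * Suc j)"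
    unfolding e3 p3(1) X_def[symmetric] using A' by (simp only: mult.left_commute)
  have B: "Qd r0 (r0 + 2 * Suc j + 1) + 4 * 2 ^ (r0 + Suc j + 1) \<le> (r0 + 7) * 2 ^ (r0 + 2 * Suc j + 1)"
  proof -
    have "4 * 2 ^ (r0 + Suc j + 1) = 8 * X" unfolding p3(3) X_def by simp
    moreover have "(r0 + 7) * 2 ^ (r0 + 2 * Suc j + 1) = 4*((r0+7)*P)" unfolding e4 by simp
    ultimately show ?thesis using B' by linarith
  qed
  show ?case using A B by blast
qed

lemma Qbound: "Qd r0 k \<le> (r0+7)*2^k"
proof (cases "k \<le> r0")
  case True
  have "(k+1)*2^k \<le> (r0+7)*(2::nat)^k" using True by (intro mult_right_mono) auto
  then show ?thesis using low[of k r0] True by simp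
next
  case False
  then obtain d where d: "k = r0 + d" by (metis le_add_diff_inverse nat_le_linear)
  show ?thesis
  proof (cases "even d")
    case True then obtain j where "d = 2*j" by blast
    then show ?thesis using Qhigh[of r0 j] d by simp
  next
    case False then obtain j where "d = 2*j+1" using oddE by blast
    then show ?thesis using Qhigh[of r0 j] d by simp
  qed
qed

definition pot :: "nat \<Rightarrow> nat \<Rightarrow> int" where
  "pot r0 r = int ((r0+7)*2^r) - int (Qd r0 r)"

lemma pot_nonneg: "pot r0 r \<ge> 0"
proof -
  have "int (Qd r0 r) \<le> int ((r0+7)*2^r)" using Qbound[of r0 r] by (simp only: of_nat_le_iff)
  then show ?thesis unfolding pot_def by linarith
qed

lemma pot_step: "pot r0 (Suc r) + int (Bd r0 (Suc r)) = 2 * pot r0 r"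
  by (simp add: pot_def)

lemma cl_bound:
  assumes "a \<le> Bd r0 r" "b \<le> Bd r0 r"
  shows "created_len r0 (Suc r) (a+b) \<le> Bd r0 (Suc r)"
proof (cases "reduce_applies r0 (Suc r)")
  case True
  have "length (reduce [0..<a+b]) \<le> (a+b+1) div 2 + 1" by (rule reduce_len)
  also have "\<dots> \<le> Bd r0 r + 1" using assms by simp
  finally show ?thesis using True by (simp add: created_len_def)
next
  case False then show ?thesis using assms by (simp add: created_len_def)
qed

definition inv :: "nat \<Rightarrow> ssh_state \<Rightarrow> bool" where
  "inv r0 st = (case st of (S, n, c) \<Rightarrow>
     (\<forall>x\<in>#S. snd (snd x) \<le> Bd r0 (fst (snd x))) \<and>
     int c + (\<Sum>x\<in>#S. pot r0 (fst (snd x))) \<le> int ((r0+7)*n))"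

lemma inv_step: "ssh_step r0 st st' \<Longrightarrow> inv r0 st \<Longrightarrow> inv r0 st'"
proof (induction rule: ssh_step.induct)
  case (insert S n c h)
  have "pot r0 0 = int (r0+7) - 1" by (simp add: pot_def)
  then show ?case using insert by (auto simp: inv_def algebra_simps)
next
  case (merge S h r a b n c)
  let ?cl = "created_len r0 (Suc r) (a + b)"
  have ab: "a \<le> Bd r0 r" "b \<le> Bd r0 r" using merge by (auto simp: inv_def)
  have cl: "?cl \<le> Bd r0 (Suc r)" using cl_bound[OF ab] .
  have ps: "pot r0 (Suc r) + int (Bd r0 (Suc r)) = 2 * pot r0 r" by (rule pot_step)
  show ?case using merge cl ps by (auto simp: inv_def algebra_simps)
next
  case (meld S n c j i)
  let ?f = "(\<lambda>(h, r, a). if h = j then (i, r, a) else (h, r, a))"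
  have e: "image_mset (\<lambda>x. pot r0 (fst (snd x))) (image_mset ?f S)
         = image_mset (\<lambda>x. pot r0 (fst (snd x))) S"
    by (simp add: multiset.map_comp, rule image_mset_cong, auto)
  have "\<forall>x\<in>#image_mset ?f S. snd (snd x) \<le> Bd r0 (fst (snd x))"
    using meld by (auto simp: inv_def)
  then show ?case using meld e by (simp add: inv_def)
next
  case (remove S h r a n c)
  have "pot r0 r \<ge> 0" by (rule pot_nonneg)
  then show ?case using remove by (auto simp: inv_def)
qed

lemma inv_reach: "(ssh_step r0)\<^sup>*\<^sup>* st st' \<Longrightarrow> inv r0 st \<Longrightarrow> inv r0 st'"
  by (induction rule: rtranclp_induct) (auto intro: inv_step)

lemma c_bound:
  assumes "ssh_reachable r0 (S, N, c)"
  shows "c \<le> (r0+7)*N"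
proof -
  have i0: "inv r0 ({#}, 0, 0)" by (simp add: inv_def)
  have "inv r0 (S, N, c)" using inv_reach[OF _ i0] assms unfolding ssh_reachable_def by blast
  then have h: "int c + (\<Sum>x\<in>#S. pot r0 (fst (snd x))) \<le> int ((r0+7)*N)" by (simp add: inv_def)
  have "(\<Sum>x\<in>#S. pot r0 (fst (snd x))) \<ge> 0" by (induction S) (auto simp: pot_nonneg intro: add_nonneg_nonneg)
  then show ?thesis using h by linarith
qed

theorem lemma4:
  "\<exists>K::real. \<forall>eps::real. \<forall>S N c.
     0 < eps \<and> eps < 1 \<and> ssh_reachable (ssh_r0 eps) (S, N, c) \<longrightarrow>
       (eps \<le> 1/2 \<longrightarrow> real c \<le> K * real N * log 2 (1 / eps)) \<and>
       real c \<le> K * real N * (1 + log 2 (1 / eps))"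
proof (intro exI[of _ 9] allI impI)
  fix eps :: real and S N c
  assume a: "0 < eps \<and> eps < 1 \<and> ssh_reachable (ssh_r0 eps) (S, N, c)"
  let ?L = "log 2 (1/eps)"
  have L0: "?L > 0" using a by (simp add: divide_simps)
  have r0: "real (ssh_r0 eps) \<le> ?L + 1"
    unfolding ssh_r0_def using L0 by (simp add: of_nat_nat)
  have "real c \<le> real ((ssh_r0 eps + 7) * N)" using c_bound a by (simp only: of_nat_le_iff) blast
  also have "\<dots> = (real (ssh_r0 eps) + 7) * real N" by simp
  also have "\<dots> \<le> (?L + 8) * real N" using r0 by (intro mult_right_mono) auto
  finally have c: "real c \<le> (?L + 8) * real N" .
  show "(eps \<le> 1/2 \<longrightarrow> real c \<le> 9 * real N * ?L) \<and> real c \<le> 9 * real N * (1 + ?L)"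
  proof (intro conjI impI)
    assume "eps \<le> 1/2"
    then have "1/eps \<ge> 2" using a by (simp add: divide_simps)
    then have "?L \<ge> 1" using a by (simp add: le_log_iff)
    then have "real N * 1 \<le> real N * ?L" by (intro mult_left_mono) auto
    then have "(?L + 8) * real N \<le> 9 * real N * ?L" by (simp add: algebra_simps)
    then show "real c \<le> 9 * real N * ?L" using c by linarith
  next
    have "(?L + 8) * real N \<le> 9 * real N * (1 + ?L)" using L0 by (simp add: algebra_simps)
    then show "real c \<le> 9 * real N * (1 + ?L)" using c by linarith
  qed
qed

end
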